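(* Let $D_\infty$ be the infinite dihedral group, given by the monoid presentation $\langle a,b\mid a^2=1,\ b^2=1\rangle$. Then: (1) $D_\infty$ belongs to the Mal'cev product $\mathbf{Com}\,ⓜ\,\mathbf{Fin}$. (2) For every $n\ge1$ the Zimin word $Z_n$ is an isoterm relative to $D_\infty$. Consequently, the semigroup identities of $D_\infty$ admit no finite basis.
   Context: The Zimin words are defined by $Z_1=x_1$ and $Z_{n+1}=Z_n\,x_{n+1}\,Z_n$. A word $v$ is an isoterm relative to a semigroup $S$ if the only word $v'$ such that $S$ satisfies $v\approx v'$ is $v'=v$. For classes of semigroups $\mathbf{A},\mathbf{B}$, the Mal'cev product $\mathbf{A}\,ⓜ\,\mathbf{B}$ is the class of all semigroups $S$ admitting a congruence $\theta$ such that $S/\theta\in\mathbf{B}$ and every $\theta$-class that is a subsemigroup of $S$ lies in $\mathbf{A}$. $\mathbf{Com}$ denotes the class of commutative semigroups and $\mathbf{Fin}$ the class of finite semigroups. The identities considered are semigroup identities, i.e. identities $u\approx v$ between nonempty words. *)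

theory Defs
  imports Main
begin

text \<open>Generators: a = True, b = False. Elements of the free monoid are bool lists.
  The defining relations a^2 = 1, b^2 = 1 generate the congruence below.\<close>

inductive dih_step :: "bool list \<Rightarrow> bool list \<Rightarrow> bool" where
  "dih_step (xs @ [c, c] @ ys) (xs @ ys)"

definition dih_cong :: "bool list \<Rightarrow> bool list \<Rightarrow> bool" where
  "dih_cong = equivclp dih_step"

lemma equivp_dih_cong: "equivp dih_cong"
  unfolding dih_cong_def
  by (intro equivpI reflpI sympI transpI) (auto intro: equivclp_sym equivclp_trans)

quotient_type Dinf = "bool list" / dih_cong
  by (rule equivp_dih_cong)

lemma dih_step_app: "dih_step x y \<Longrightarrow> dih_step (z @ x @ w) (z @ y @ w)"
proof (induction rule: dih_step.induct)
  case (1 xs c ys)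
  have "dih_step ((z @ xs) @ [c, c] @ (ys @ w)) ((z @ xs) @ (ys @ w))"
    by (rule dih_step.intros)
  then show ?case by simp
qed

lemma dih_cong_app: "dih_cong x y \<Longrightarrow> dih_cong (z @ x @ w) (z @ y @ w)"
  unfolding dih_cong_def equivclp_def
proof (induction rule: rtranclp_induct)
  case base then show ?case by simp
next
  case (step y u)
  from step.hyps(2) have "symclp dih_step (z @ y @ w) (z @ u @ w)"
    by (auto simp: symclp_def intro: dih_step_app)
  with step.IH show ?case by (rule rtranclp.rtrancl_into_rtrancl)
qed

lemma dih_cong_append:
  "dih_cong x y \<Longrightarrow> dih_cong u v \<Longrightarrow> dih_cong (x @ u) (y @ v)"
proof -
  assume a: "dih_cong x y" "dih_cong u v"
  have "dih_cong ([] @ x @ u) ([] @ y @ u)" by (rule dih_cong_app[OF a(1)])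
  moreover have "dih_cong (y @ u @ []) (y @ v @ [])" by (rule dih_cong_app[OF a(2)])
  ultimately show ?thesis
    using equivp_transp[OF equivp_dih_cong] by fastforce
qed

instantiation Dinf :: monoid_mult
begin
lift_definition one_Dinf :: Dinf is "[]" .
lift_definition times_Dinf :: "Dinf \<Rightarrow> Dinf \<Rightarrow> Dinf" is "(@)"
  by (rule dih_cong_append)
instance
proof
  fix a b c :: Dinf
  show "a * b * c = a * (b * c)" by transfer (simp add: equivp_reflp[OF equivp_dih_cong])
  show "1 * a = a" by transfer (simp add: equivp_reflp[OF equivp_dih_cong])
  show "a * 1 = a" by transfer (simp add: equivp_reflp[OF equivp_dih_cong])
qed
end

fun word_eval :: "(nat \<Rightarrow> 'a::semigroup_mult) \<Rightarrow> nat list \<Rightarrow> 'a" where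
  "word_eval \<phi> [] = undefined"
| "word_eval \<phi> [x] = \<phi> x"
| "word_eval \<phi> (x # y # ys) = \<phi> x * word_eval \<phi> (y # ys)"

definition satisfies_id :: "'a::semigroup_mult itself \<Rightarrow> nat list \<Rightarrow> nat list \<Rightarrow> bool" where
  "satisfies_id _ u v \<longleftrightarrow> u \<noteq> [] \<and> v \<noteq> [] \<and> (\<forall>\<phi> :: nat \<Rightarrow> 'a. word_eval \<phi> u = word_eval \<phi> v)"

definition isoterm :: "'a::semigroup_mult itself \<Rightarrow> nat list \<Rightarrow> bool" where
  "isoterm T v \<longleftrightarrow> (\<forall>v'. satisfies_id T v v' \<longrightarrow> v' = v)"

fun zimin :: "nat \<Rightarrow> nat list" where
  "zimin 0 = []"
| "zimin (Suc n) = zimin n @ [n] @ zimin n"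

definition subst_word :: "(nat \<Rightarrow> nat list) \<Rightarrow> nat list \<Rightarrow> nat list" where
  "subst_word \<sigma> w = concat (map \<sigma> w)"

inductive derivable :: "(nat list \<times> nat list) set \<Rightarrow> nat list \<Rightarrow> nat list \<Rightarrow> bool"
  for \<Sigma> where
  ax: "(u, v) \<in> \<Sigma> \<Longrightarrow> derivable \<Sigma> u v"
| refl: "derivable \<Sigma> u u"
| sym: "derivable \<Sigma> u v \<Longrightarrow> derivable \<Sigma> v u"
| trans: "derivable \<Sigma> u v \<Longrightarrow> derivable \<Sigma> v w \<Longrightarrow> derivable \<Sigma> u w"
| subst: "derivable \<Sigma> u v \<Longrightarrow> (\<forall>x. \<sigma> x \<noteq> []) \<Longrightarrow>
            derivable \<Sigma> (subst_word \<sigma> u) (subst_word \<sigma> v)"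
| mult: "derivable \<Sigma> u v \<Longrightarrow> derivable \<Sigma> (p @ u @ q) (p @ v @ q)"

definition finitely_based :: "'a::semigroup_mult itself \<Rightarrow> bool" where
  "finitely_based T \<longleftrightarrow> (\<exists>\<Sigma>. finite \<Sigma> \<and> (\<forall>(u, v) \<in> \<Sigma>. satisfies_id T u v) \<and>
      (\<forall>u v. satisfies_id T u v \<longrightarrow> derivable \<Sigma> u v))"

definition in_Com_malcev_Fin :: "'a::semigroup_mult itself \<Rightarrow> bool" where
  "in_Com_malcev_Fin _ \<longleftrightarrow> (\<exists>\<theta> :: ('a \<times> 'a) set.
      equiv UNIV \<theta> \<and>
      (\<forall>x y z. (x, y) \<in> \<theta> \<longrightarrow> (x * z, y * z) \<in> \<theta> \<and> (z * x, z * y) \<in> \<theta>) \<and>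
      finite (UNIV // \<theta>) \<and>
      (\<forall>C \<in> UNIV // \<theta>. (\<forall>x\<in>C. \<forall>y\<in>C. x * y \<in> C) \<longrightarrow> (\<forall>x\<in>C. \<forall>y\<in>C. x * y = y * x)))"

end

theory Submission
  imports Defs
begin

type_synonym G = "int \<times> bool"

definition gmul :: "G \<Rightarrow> G \<Rightarrow> G" where
  "gmul x y = (fst x + (if snd x then - fst y else fst y), snd x \<noteq> snd y)"

definition gone :: G where "gone = (0, False)"

lemma gmul_assoc: "gmul (gmul x y) z = gmul x (gmul y z)"
  by (cases x; cases y; cases z) (auto simp: gmul_def)

lemma gmul_one[simp]: "gmul gone x = x" "gmul x gone = x"
  by (cases x; simp add: gmul_def gone_def)+

definition gen :: "bool \<Rightarrow> G" where "gen c = (if c then (0, True) else (1, True))"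

fun h :: "bool list \<Rightarrow> G" where
  "h [] = gone"
| "h (c # cs) = gmul (gen c) (h cs)"

lemma h_append: "h (xs @ ys) = gmul (h xs) (h ys)"
  by (induction xs) (auto simp: gmul_assoc)

lemma gen_sq: "gmul (gen c) (gen c) = gone"
  by (auto simp: gmul_def gen_def gone_def)

lemma h_step: "dih_step x y \<Longrightarrow> h x = h y"
  by (induction rule: dih_step.induct) (simp add: h_append gmul_assoc[symmetric] gen_sq)

lemma h_cong: "dih_cong x y \<Longrightarrow> h x = h y"
  unfolding dih_cong_def equivclp_def
proof (induction rule: rtranclp_induct)
  case base then show ?case by simp
next
  case (step y z) then show ?case by (auto simp: symclp_def dest: h_step)
qed

lift_definition psi :: "Dinf \<Rightarrow> G" is h by (rule h_cong)

lemma psi_mult: "psi (x * y) = gmul (psi x) (psi y)"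
  by transfer (simp add: h_append)

lemma psi_one: "psi 1 = gone"
  by transfer simp

fun alt :: "bool \<Rightarrow> nat \<Rightarrow> bool list" where
  "alt c 0 = []"
| "alt c (Suc n) = c # alt (\<not> c) n"

lemma h_alt: "h (alt c n) = (if c then (if even n then (- int (n div 2), False) else (- int (n div 2), True))
     else (if even n then (int (n div 2), False) else (int (n div 2) + 1, True)))"
proof (induction n arbitrary: c)
  case 0 then show ?case by (simp add: gone_def)
next
  case (Suc n) then show ?case
    by (cases c) (auto simp: gmul_def gen_def elim: oddE)
qed

definition consr :: "bool \<Rightarrow> bool list \<Rightarrow> bool list" where
  "consr c ys = (case ys of [] \<Rightarrow> [c] | d # ds \<Rightarrow> if d = c then ds else c # ys)"

fun red :: "bool list \<Rightarrow> bool list" where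
  "red [] = []"
| "red (c # cs) = consr c (red cs)"

lemma red_alt: "\<exists>c n. red xs = alt c n"
proof (induction xs)
  case Nil then show ?case by (metis alt.simps(1) red.simps(1))
next
  case (Cons c xs)
  then obtain d n where e: "red xs = alt d n" by blast
  show ?case
  proof (cases n)
    case 0 then show ?thesis using e by (auto simp: consr_def intro!: exI[of _ c] exI[of _ 1])
  next
    case (Suc m)
    show ?thesis
    proof (cases "d = c")
      case True then show ?thesis using e Suc by (auto simp: consr_def)
    next
      case False then show ?thesis using e Suc
        by (auto simp: consr_def intro!: exI[of _ c] exI[of _ "Suc (Suc m)"])
    qed
  qed
qed

lemma dih_cong_refl: "dih_cong x x"
  using equivp_reflp[OF equivp_dih_cong] .
lemma dih_cong_trans: "dih_cong x y \<Longrightarrow> dih_cong y z \<Longrightarrow> dih_cong x z"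
  using equivp_transp[OF equivp_dih_cong] by blast
lemma dih_cong_sym: "dih_cong x y \<Longrightarrow> dih_cong y x"
  using equivp_symp[OF equivp_dih_cong] by blast

lemma dih_cong_step: "dih_step x y \<Longrightarrow> dih_cong x y"
  unfolding dih_cong_def by (simp add: equivclp_def symclp_def r_into_rtranclp)

lemma red_cong: "dih_cong xs (red xs)"
proof (induction xs)
  case Nil then show ?case by (simp add: dih_cong_refl)
next
  case (Cons c xs)
  have 1: "dih_cong (c # xs) (c # red xs)"
    using dih_cong_app[OF Cons, of "[c]" "[]"] by simp
  have 2: "dih_cong (c # red xs) (consr c (red xs))"
  proof (cases "red xs")
    case Nil then show ?thesis by (simp add: consr_def dih_cong_refl)
  next
    case (Cons d ds)
    show ?thesis
    proof (cases "d = c")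
      case True
      have "dih_step ([] @ [c, c] @ ds) ([] @ ds)" by (rule dih_step.intros)
      then show ?thesis using Cons True by (simp add: consr_def dih_cong_step)
    next
      case False then show ?thesis using Cons by (simp add: consr_def dih_cong_refl)
    qed
  qed
  show ?case using dih_cong_trans[OF 1 2] by simp
qed

lemma alt_inj: "h (alt c n) = h (alt d m) \<Longrightarrow> alt c n = alt d m"
proof -
  assume a: "h (alt c n) = h (alt d m)"
  have "(n = 0 \<and> m = 0) \<or> (c = d \<and> n = m)"
    using a unfolding h_alt
    by (cases c; cases d; auto split: if_splits elim!: evenE oddE; presburger)
  then show ?thesis by auto
qed

lemma h_inj: "h xs = h ys \<Longrightarrow> dih_cong xs ys"
proof -
  assume a: "h xs = h ys"
  obtain c n where c: "red xs = alt c n" using red_alt by blast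
  obtain d m where d: "red ys = alt d m" using red_alt by blast
  have "h (red xs) = h (red ys)" using a h_cong[OF red_cong[of xs]] h_cong[OF red_cong[of ys]] by simp
  then have "red xs = red ys" using alt_inj c d by simp
  then show ?thesis using red_cong[of xs] red_cong[of ys] by (metis dih_cong_sym dih_cong_trans)
qed

lemma psi_inj: "psi x = psi y \<Longrightarrow> x = y"
  by transfer (rule h_inj)

lemma h_surj: "\<exists>xs. h xs = g"
proof (cases g)
  case (Pair k e)
  show ?thesis
  proof (cases e)
    case False
    show ?thesis
    proof (cases "k \<ge> 0")
      case True then show ?thesis using Pair False
        by (intro exI[of _ "alt False (2 * nat k)"]) (simp add: h_alt del: alt.simps)
    next
      case f: False then show ?thesis using Pair False
        by (intro exI[of _ "alt True (2 * nat (- k))"]) (simp add: h_alt del: alt.simps)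
    qed
  next
    case True
    show ?thesis
    proof (cases "k \<ge> 1")
      case t: True then show ?thesis using Pair True
        by (intro exI[of _ "alt False (2 * nat (k - 1) + 1)"]) (simp add: h_alt del: alt.simps)
    next
      case f: False then show ?thesis using Pair True
        by (intro exI[of _ "alt True (2 * nat (- k) + 1)"]) (simp add: h_alt del: alt.simps)
    qed
  qed
qed

lemma psi_surj: "\<exists>x. psi x = g"
proof -
  obtain xs where "h xs = g" using h_surj by blast
  then have "psi (abs_Dinf xs) = g" by transfer simp
  then show ?thesis by blast
qed

definition gev :: "(nat \<Rightarrow> G) \<Rightarrow> nat list \<Rightarrow> G" where
  "gev g w = foldr (\<lambda>x acc. gmul (g x) acc) w gone"

lemma gev_simps[simp]: "gev g [] = gone" "gev g (x # xs) = gmul (g x) (gev g xs)"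
  by (simp_all add: gev_def)

lemma gev_append: "gev g (xs @ ys) = gmul (gev g xs) (gev g ys)"
  by (induction xs) (auto simp: gmul_assoc)

lemma word_eval_psi: "w \<noteq> [] \<Longrightarrow> psi (word_eval \<phi> w) = gev (psi \<circ> \<phi>) w"
  by (induction \<phi> w rule: word_eval.induct) (auto simp: psi_mult)

lemma sat_iff: "satisfies_id TYPE(Dinf) u v \<longleftrightarrow> u \<noteq> [] \<and> v \<noteq> [] \<and> (\<forall>g. gev g u = gev g v)"
proof
  assume a: "satisfies_id TYPE(Dinf) u v"
  have "gev g u = gev g v" for g
  proof -
    define \<phi> where "\<phi> x = (SOME d. psi d = g x)" for x
    have "psi \<circ> \<phi> = g" unfolding \<phi>_def comp_def
      by (rule ext) (metis (mono_tags) psi_surj someI_ex)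
    moreover have "word_eval \<phi> u = word_eval \<phi> v" using a by (simp add: satisfies_id_def)
    ultimately show ?thesis using a word_eval_psi[of u \<phi>] word_eval_psi[of v \<phi>]
      by (simp add: satisfies_id_def)
  qed
  then show "u \<noteq> [] \<and> v \<noteq> [] \<and> (\<forall>g. gev g u = gev g v)" using a by (simp add: satisfies_id_def)
next
  assume a: "u \<noteq> [] \<and> v \<noteq> [] \<and> (\<forall>g. gev g u = gev g v)"
  show "satisfies_id TYPE(Dinf) u v"
    unfolding satisfies_id_def using a word_eval_psi[of u] word_eval_psi[of v] psi_inj by metis
qed

lemma part1: "in_Com_malcev_Fin TYPE(Dinf)"
proof -
  define \<theta> :: "(Dinf \<times> Dinf) set" where "\<theta> = {(x, y). snd (psi x) = snd (psi y)}"
  have eq: "equiv UNIV \<theta>" unfolding \<theta>_def by (auto intro!: equivI refl_onI symI transI)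
  have cong: "\<forall>x y z. (x, y) \<in> \<theta> \<longrightarrow> (x * z, y * z) \<in> \<theta> \<and> (z * x, z * y) \<in> \<theta>"
    unfolding \<theta>_def by (auto simp: psi_mult gmul_def)
  have cls: "UNIV // \<theta> = (\<lambda>b. {x. snd (psi x) = b}) ` UNIV"
  proof -
    have "\<exists>x. snd (psi x) = b" for b using psi_surj[of "(0, b)"] by (metis snd_conv)
    then show ?thesis unfolding \<theta>_def quotient_def by auto
  qed
  have fin: "finite (UNIV // \<theta>)" unfolding cls by simp
  have comm: "\<forall>C \<in> UNIV // \<theta>. (\<forall>x\<in>C. \<forall>y\<in>C. x * y \<in> C) \<longrightarrow> (\<forall>x\<in>C. \<forall>y\<in>C. x * y = y * x)"
  proof (intro ballI impI)
    fix C x y assume C: "C \<in> UNIV // \<theta>" and cl: "\<forall>x\<in>C. \<forall>y\<in>C. x * y \<in> C" and x: "x \<in> C" and y: "y \<in> C"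
    obtain b where b: "C = {x. snd (psi x) = b}" using C cls by auto
    show "x * y = y * x"
    proof (cases b)
      case True
      obtain a where a: "psi a = (0, True)" using psi_surj by blast
      then have "a \<in> C" using b True by simp
      then have "a * a \<in> C" using cl by blast
      then show ?thesis using a b True by (simp add: psi_mult gmul_def)
    next
      case False
      then show ?thesis using x y b
        by (intro psi_inj) (auto simp: psi_mult gmul_def)
    qed
  qed
  show ?thesis unfolding in_Com_malcev_Fin_def using eq cong fin comm by blast
qed

definition st :: "nat list \<Rightarrow> nat \<Rightarrow> bool" where "st w z = odd (count_list w z)"

lemma st_append: "st (a @ b) z = (st a z \<noteq> st b z)"
  by (simp add: st_def)

definition sgnE :: "nat set \<Rightarrow> nat list \<Rightarrow> int" where
  "sgnE E p = (\<Prod>z\<in>E. (-1) ^ count_list p z)"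

definition gE :: "nat set \<Rightarrow> nat \<Rightarrow> nat \<Rightarrow> G" where
  "gE E y z = (if z = y then 1 else 0, z \<in> E)"

lemma snd_gev: "snd (gev g w) = odd (length (filter (\<lambda>z. snd (g z)) w))"
  by (induction w) (auto simp: gmul_def gone_def)

lemma gev_snoc: "gev g (w @ [a]) = gmul (gev g w) (g a)"
  by (simp add: gev_append)

lemma fst_gev: "fst (gev g w) = (\<Sum>j<length w. (if snd (gev g (take j w)) then -1 else 1) * fst (g (w ! j)))"
proof (induction w rule: rev_induct)
  case Nil then show ?case by (simp add: gone_def)
next
  case (snoc a w)
  have "(\<Sum>j<length (w @ [a]). (if snd (gev g (take j (w @ [a]))) then -1 else 1) * fst (g ((w @ [a]) ! j)))
     = (\<Sum>j<length w. (if snd (gev g (take j w)) then -1 else 1) * fst (g (w ! j)))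
       + (if snd (gev g w) then -1 else 1) * fst (g a)"
    by (simp add: nth_append)
  then show ?case using snoc by (simp add: gev_snoc gmul_def)
qed

lemma length_filter_in: "finite E \<Longrightarrow> length (filter (\<lambda>z. z \<in> E) p) = (\<Sum>z\<in>E. count_list p z)"
proof (induction p)
  case Nil then show ?case by simp
next
  case (Cons a p)
  have "(\<Sum>z\<in>E. count_list (a # p) z) = (\<Sum>z\<in>E. (if a = z then 1 else 0) + count_list p z)"
    by (rule sum.cong) auto
  also have "\<dots> = (if a \<in> E then 1 else 0) + (\<Sum>z\<in>E. count_list p z)"
    using Cons.prems by (simp add: sum.distrib)
  finally show ?case using Cons by simp
qed

lemma neg1_pow: "(-1::int) ^ n = (if odd n then -1 else 1)"
  by simp

lemma sign_gE: "finite E \<Longrightarrow> (if snd (gev (gE E y) p) then -1 else 1) = sgnE E p"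
proof -
  assume f: "finite E"
  have "snd (gev (gE E y) p) = odd (\<Sum>z\<in>E. count_list p z)"
    using snd_gev[of "gE E y" p] length_filter_in[OF f, of p] by (simp add: gE_def)
  moreover have "sgnE E p = (-1) ^ (\<Sum>z\<in>E. count_list p z)"
    by (simp add: sgnE_def power_sum)
  ultimately show ?thesis by (simp only: neg1_pow)
qed

lemma S_formula: "finite E \<Longrightarrow> fst (gev (gE E y) w) = (\<Sum>j<length w. sgnE E (take j w) * (if w ! j = y then 1 else 0))"
  by (simp add: fst_gev sign_gE) (simp add: gE_def)

lemma fourier:
  assumes "finite V"
  shows "(\<Sum>E\<in>Pow V. (\<Prod>z\<in>E. (-1::int) ^ (if c z then 1 else 0)) * sgnE E p)
     = (if \<forall>z\<in>V. c z = st p z then 2 ^ card V else 0)"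
proof -
  define f where "f z = (-1::int) ^ (if c z then 1 else 0) * (-1) ^ count_list p z" for z
  have "(\<Sum>E\<in>Pow V. (\<Prod>z\<in>E. (-1::int) ^ (if c z then 1 else 0)) * sgnE E p) = (\<Sum>E\<in>Pow V. \<Prod>z\<in>E. f z)"
    by (rule sum.cong) (auto simp: sgnE_def f_def prod.distrib)
  also have "\<dots> = (\<Prod>z\<in>V. f z + 1)"
    using prod_add[OF assms, of f "\<lambda>_. 1"] by simp
  also have "\<dots> = (\<Prod>z\<in>V. if c z = st p z then 2 else 0)"
    by (rule prod.cong) (auto simp: f_def st_def)
  also have "\<dots> = (if \<forall>z\<in>V. c z = st p z then 2 ^ card V else 0)"
    using assms by (auto simp: prod_zero_iff)
  finally show ?thesis .
qed

lemma T_formula: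
  assumes "finite V"
  shows "(\<Sum>E\<in>Pow V. (\<Prod>z\<in>E. (-1::int) ^ (if c z then 1 else 0)) * fst (gev (gE E y) w))
    = (\<Sum>j<length w. if w ! j = y \<and> (\<forall>z\<in>V. c z = st (take j w) z) then 2 ^ card V else 0)"
proof -
  have fE: "E \<in> Pow V \<Longrightarrow> finite E" for E using assms finite_subset by auto
  have "(\<Sum>E\<in>Pow V. (\<Prod>z\<in>E. (-1::int) ^ (if c z then 1 else 0)) * fst (gev (gE E y) w))
     = (\<Sum>E\<in>Pow V. \<Sum>j<length w. (\<Prod>z\<in>E. (-1::int) ^ (if c z then 1 else 0)) * sgnE E (take j w) * (if w ! j = y then 1 else 0))"
  proof (rule sum.cong[OF HOL.refl])
    fix E assume "E \<in> Pow V"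
    then have f: "finite E" by (rule fE)
    show "(\<Prod>z\<in>E. (-1::int) ^ (if c z then 1 else 0)) * fst (gev (gE E y) w) =
      (\<Sum>j<length w. (\<Prod>z\<in>E. (-1::int) ^ (if c z then 1 else 0)) * sgnE E (take j w) * (if w ! j = y then 1 else 0))"
      by (simp only: S_formula[OF f] sum_distrib_left mult.assoc)
  qed
  also have "\<dots> = (\<Sum>j<length w. \<Sum>E\<in>Pow V. (\<Prod>z\<in>E. (-1::int) ^ (if c z then 1 else 0)) * sgnE E (take j w) * (if w ! j = y then 1 else 0))"
    by (rule sum.swap)
  also have "\<dots> = (\<Sum>j<length w. (\<Sum>E\<in>Pow V. (\<Prod>z\<in>E. (-1::int) ^ (if c z then 1 else 0)) * sgnE E (take j w)) * (if w ! j = y then 1 else 0))"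
    by (simp only: sum_distrib_right)
  also have "\<dots> = (\<Sum>j<length w. if w ! j = y \<and> (\<forall>z\<in>V. c z = st (take j w) z) then 2 ^ card V else 0)"
    by (rule sum.cong[OF HOL.refl]) (simp only: fourier[OF assms], simp)
  finally show ?thesis .
qed

lemma T_pos: "(0::int) < (\<Sum>j<length w. if w ! j = y \<and> P j then 2 ^ k else 0) \<longleftrightarrow> (\<exists>j<length w. w ! j = y \<and> P j)"
proof
  assume a: "0 < (\<Sum>j<length w. if w ! j = y \<and> P j then (2::int) ^ k else 0)"
  show "\<exists>j<length w. w ! j = y \<and> P j"
  proof (rule ccontr)
    assume "\<not> (\<exists>j<length w. w ! j = y \<and> P j)"
    then have "(\<Sum>j<length w. if w ! j = y \<and> P j then (2::int) ^ k else 0) = 0"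
      by (intro sum.neutral) auto
    then show False using a by simp
  qed
next
  assume "\<exists>j<length w. w ! j = y \<and> P j"
  then obtain j where j: "j < length w" "w ! j = y" "P j" by blast
  show "0 < (\<Sum>j<length w. if w ! j = y \<and> P j then (2::int) ^ k else 0)"
    by (rule sum_pos2[of _ j]) (use j in auto)
qed

lemma gev_len: "gev (\<lambda>_. (1, False)) w = (int (length w), False)"
  by (induction w) (auto simp: gmul_def gone_def)

lemma gev_cnt: "gev (\<lambda>z. (if z = y then 1 else 0, False)) w = (int (count_list w y), False)"
  by (induction w) (auto simp: gmul_def gone_def)

definition inj_st :: "nat list \<Rightarrow> bool" where
  "inj_st u = (\<forall>i j. i < j \<longrightarrow> j < length u \<longrightarrow> st (take i u) \<noteq> st (take j u))"

lemma st_out: "z \<notin> set u \<Longrightarrow> \<not> st (take i u) z"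
proof -
  assume "z \<notin> set u"
  then have "z \<notin> set (take i u)" by (metis in_set_takeD)
  then show ?thesis by (simp add: st_def)
qed

lemma isoterm_inj:
  assumes inj: "inj_st u" and sat: "satisfies_id TYPE(Dinf) u v"
  shows "v = u"
proof -
  have G: "\<And>g. gev g u = gev g v" using sat by (simp add: sat_iff)
  have len: "length v = length u" using G[of "\<lambda>_. (1, False)"] by (simp add: gev_len)
  have cnt: "count_list u y = count_list v y" for y using G[of "\<lambda>z. (if z = y then 1 else 0, False)"] by (simp add: gev_cnt)
  have setv: "set v = set u" using cnt by (metis count_list_0_iff subsetI subset_antisym)
  define V where "V = set u"
  have fV: "finite V" by (simp add: V_def)
  have wit: "(\<exists>j<length u. u ! j = y \<and> (\<forall>z\<in>V. c z = st (take j u) z))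
        \<longleftrightarrow> (\<exists>j<length v. v ! j = y \<and> (\<forall>z\<in>V. c z = st (take j v) z))" for c y
  proof -
    have "(\<Sum>j<length u. if u ! j = y \<and> (\<forall>z\<in>V. c z = st (take j u) z) then (2::int) ^ card V else 0)
       = (\<Sum>j<length v. if v ! j = y \<and> (\<forall>z\<in>V. c z = st (take j v) z) then 2 ^ card V else 0)"
      unfolding T_formula[OF fV, of c y u, symmetric] T_formula[OF fV, of c y v, symmetric] G ..
    then show ?thesis
      using T_pos[of u y "\<lambda>j. \<forall>z\<in>V. c z = st (take j u) z" "card V"]
        T_pos[of v y "\<lambda>j. \<forall>z\<in>V. c z = st (take j v) z" "card V"] by simp
  qed
  have "i \<le> length u \<Longrightarrow> take i v = take i u" for i
  proof (induction i)
    case 0 then show ?case by simp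
  next
    case (Suc i)
    then have IH: "take i v = take i u" and i: "i < length u" by auto
    have "\<exists>j<length v. v ! j = v ! i \<and> (\<forall>z\<in>V. st (take i u) z = st (take j v) z)"
      using i len IH by (intro exI[of _ i]) simp
    then obtain j where j: "j < length u" "u ! j = v ! i" "\<forall>z\<in>V. st (take i u) z = st (take j u) z"
      using wit[of "v ! i" "st (take i u)"] by blast
    have "st (take i u) = st (take j u)"
    proof
      fix z show "st (take i u) z = st (take j u) z"
        using j(3) st_out[of z u] by (cases "z \<in> V") (auto simp: V_def)
    qed
    then have "i = j"
    proof -
      assume e: "st (take i u) = st (take j u)"
      have "\<not> i < j" using inj j(1) e unfolding inj_st_def by blast
      moreover have "\<not> j < i" using inj i e unfolding inj_st_def by metis
      ultimately show "i = j" by simp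
    qed
    then show ?case using IH j i len by (simp add: take_Suc_conv_app_nth)
  qed
  from this[of "length u"] show ?thesis using len by simp
qed

lemma zimin_set: "set (zimin n) \<subseteq> {..<n}"
  by (induction n) auto

lemma st_ext_neq: "st a \<noteq> st b \<Longrightarrow> st (p @ a) \<noteq> st (p @ b)"
proof
  assume ne: "st a \<noteq> st b" and e: "st (p @ a) = st (p @ b)"
  have "st a = st b"
  proof
    fix z
    have "st (p @ a) z = st (p @ b) z" using e by simp
    then show "st a z = st b z" by (cases "st p z") (auto simp: st_append)
  qed
  with ne show False by simp
qed

lemma zimin_inj: "i < j \<Longrightarrow> j \<le> length (zimin n) \<Longrightarrow> st (take i (zimin n)) \<noteq> st (take j (zimin n))"
proof (induction n arbitrary: i j)
  case 0 then show ?case by simp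
next
  case (Suc n)
  define Z where "Z = zimin n"
  define L where "L = length Z"
  have nZ: "n \<notin> set Z" using zimin_set[of n] by (auto simp: Z_def)
  have Zs: "zimin (Suc n) = Z @ n # Z" by (simp add: Z_def)
  have tk1: "k \<le> L \<Longrightarrow> take k (zimin (Suc n)) = take k Z" for k
    unfolding Zs by (simp add: L_def)
  have tk2: "L < k \<Longrightarrow> take k (zimin (Suc n)) = (Z @ [n]) @ take (k - Suc L) Z" for k
    unfolding Zs by (simp add: L_def) (metis Suc_diff_Suc take_Suc_Cons)
  have st1: "k \<le> L \<Longrightarrow> \<not> st (take k (zimin (Suc n))) n" for k
    using tk1[of k] st_out[of n Z k] nZ by simp
  have st2: "L < k \<Longrightarrow> st (take k (zimin (Suc n))) n" for k
  proof -
    assume "L < k"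
    then have "take k (zimin (Suc n)) = Z @ [n] @ take (k - Suc L) Z" using tk2 by simp
    moreover have "n \<notin> set (take (k - Suc L) Z)" using nZ by (metis in_set_takeD)
    ultimately show ?thesis using nZ by (simp add: st_def)
  qed
  have len: "length (zimin (Suc n)) = Suc (2 * L)" unfolding Zs by (simp add: L_def)
  show ?case
  proof (cases "j \<le> L")
    case True
    then show ?thesis using Suc tk1[of i] tk1[of j] by (simp add: Z_def L_def)
  next
    case jL: False
    show ?thesis
    proof (cases "i \<le> L")
      case True
      then have "\<not> st (take i (zimin (Suc n))) n" "st (take j (zimin (Suc n))) n"
        using st1[of i] st2[of j] jL by auto
      then show ?thesis by metis
    next
      case False
      have "st (take (i - Suc L) Z) \<noteq> st (take (j - Suc L) Z)"
        using Suc.IH[of "i - Suc L" "j - Suc L"] Suc.prems False len by (simp add: Z_def L_def)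
      then have "st ((Z @ [n]) @ take (i - Suc L) Z) \<noteq> st ((Z @ [n]) @ take (j - Suc L) Z)"
        by (rule st_ext_neq)
      then show ?thesis using tk2[of i] tk2[of j] False jL by simp
    qed
  qed
qed

lemma part2: "\<forall>n \<ge> 1. isoterm TYPE(Dinf) (zimin n)"
proof (intro allI impI)
  fix n :: nat assume "n \<ge> 1"
  have "inj_st (zimin n)" unfolding inj_st_def using zimin_inj by (meson less_imp_le)
  then show "isoterm TYPE(Dinf) (zimin n)"
    unfolding isoterm_def using isoterm_inj by blast
qed

definition aN :: "nat \<Rightarrow> nat \<Rightarrow> nat" where
  "aN N t = (if t < 2*N then t else if t < 3*N then 3*N - 1 - t else 5*N - 1 - t)"

definition wN :: "nat \<Rightarrow> nat \<Rightarrow> nat" where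
  "wN N t = (if t < 4*N then aN N t else 2*N + aN N (t - 4*N))"

lemma aN_P1: "s < t \<Longrightarrow> t < 4*N \<Longrightarrow> aN N s = aN N t \<Longrightarrow> s + N + 1 \<le> t"
  unfolding aN_def by (auto split: if_splits)

lemma aN_lt: "t < 4*N \<Longrightarrow> aN N t < 2*N"
  unfolding aN_def by (auto split: if_splits)

lemma wN_P1: "s < t \<Longrightarrow> t < 8*N \<Longrightarrow> wN N s = wN N t \<Longrightarrow> s + N + 1 \<le> t"
  unfolding wN_def using aN_P1[of s t N] aN_P1[of "s - 4*N" "t - 4*N" N] aN_lt[of s N] aN_lt[of t N] aN_lt[of "t - 4*N" N]
  by (auto split: if_splits; arith)

lemma aN_P2: "2 \<le> N \<Longrightarrow> s < t \<Longrightarrow> t + 1 < 4*N \<Longrightarrow> aN N s = aN N t \<Longrightarrow> aN N (s+1) \<noteq> aN N (t+1)"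
  unfolding aN_def by (auto split: if_splits)

lemma wN_P2: "2 \<le> N \<Longrightarrow> s < t \<Longrightarrow> t + 1 < 8*N \<Longrightarrow> wN N s = wN N t \<Longrightarrow> wN N (s+1) \<noteq> wN N (t+1)"
proof -
  assume N: "2 \<le> N" and st: "s < t" "t + 1 < 8*N" and e: "wN N s = wN N t"
  show ?thesis
  proof (cases "t < 4*N")
    case True
    then have s4: "s < 4*N" using st by simp
    show ?thesis
    proof (cases "t + 1 < 4*N")
      case True then show ?thesis using aN_P2[OF N st(1) True] e s4 st by (simp add: wN_def)
    next
      case False
      then have "t + 1 = 4*N" using \<open>t < 4*N\<close> by simp
      moreover have "s + 1 < 4*N" using st \<open>t < 4*N\<close> by simp
      ultimately show ?thesis using aN_lt[of "s+1" N] by (simp add: wN_def)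
    qed
  next
    case False
    show ?thesis
    proof (cases "s < 4*N")
      case True then show ?thesis using e False aN_lt[of s N] by (simp add: wN_def)
    next
      case s4: False
      have "aN N (s - 4*N) = aN N (t - 4*N)" using e False s4 by (simp add: wN_def)
      then have "aN N (s - 4*N + 1) \<noteq> aN N (t - 4*N + 1)"
        using aN_P2[OF N, of "s - 4*N" "t - 4*N"] st False s4 by simp
      moreover have "s - 4*N + 1 = s + 1 - 4*N" "t - 4*N + 1 = t + 1 - 4*N" using False s4 by auto
      ultimately show ?thesis using False s4 by (simp add: wN_def)
    qed
  qed
qed


definition blk :: "nat \<Rightarrow> nat \<Rightarrow> nat list" where
  "blk N b = [b..<b+N] @ [b+N..<b+2*N] @ rev [b..<b+N] @ rev [b+N..<b+2*N]"

definition WN :: "nat \<Rightarrow> nat list" where "WN N = blk N 0 @ blk N (2*N)"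

lemma blk_len[simp]: "length (blk N b) = 4*N" by (simp add: blk_def)

lemma blk_nth: "t < 4*N \<Longrightarrow> blk N b ! t = b + aN N t"
  unfolding blk_def aN_def by (auto simp: nth_append rev_nth)

lemma WN_len: "length (WN N) = 8*N" by (simp add: WN_def)

lemma WN_nth: "t < 8*N \<Longrightarrow> WN N ! t = wN N t"
  unfolding WN_def wN_def by (auto simp: nth_append blk_nth)

lemma subst_word_append[simp]: "subst_word \<sigma> (xs @ ys) = subst_word \<sigma> xs @ subst_word \<sigma> ys"
  by (simp add: subst_word_def)

lemma subst_word_comp: "subst_word \<sigma> (subst_word \<tau> u) = subst_word (\<lambda>x. subst_word \<sigma> (\<tau> x)) u"
  by (induction u) (simp_all add: subst_word_def)

lemma subst_word_id: "subst_word (\<lambda>x. [x]) u = u"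
  by (induction u) (simp_all add: subst_word_def)

lemma subst_word_nonempty: "\<forall>x. \<sigma> x \<noteq> [] \<Longrightarrow> u \<noteq> [] \<Longrightarrow> subst_word \<sigma> u \<noteq> []"
  by (cases u) (auto simp: subst_word_def)

lemma deriv_inv:
  assumes ax: "\<And>a b \<sigma> p q. (a, b) \<in> \<Sigma> \<Longrightarrow> \<forall>x. \<sigma> x \<noteq> [] \<Longrightarrow>
      (p @ subst_word \<sigma> a @ q = W \<longleftrightarrow> p @ subst_word \<sigma> b @ q = W)"
  shows "derivable \<Sigma> u v \<Longrightarrow> \<forall>x. \<sigma> x \<noteq> [] \<Longrightarrow>
      (p @ subst_word \<sigma> u @ q = W \<longleftrightarrow> p @ subst_word \<sigma> v @ q = W)"
proof (induction arbitrary: \<sigma> p q rule: derivable.induct)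
  case (ax u v) show ?case by (rule assms[OF ax.hyps ax.prems])
next
  case (refl u) then show ?case by simp
next
  case (sym u v) show ?case using sym.IH[OF sym.prems, of p q] by (rule HOL.sym)
next
  case (trans u v w) show ?case using trans.IH(1)[OF trans.prems, of p q] trans.IH(2)[OF trans.prems, of p q] by (rule HOL.trans)
next
  case (subst u v \<tau>)
  have ne: "\<forall>x. subst_word \<sigma> (\<tau> x) \<noteq> []" using subst.prems subst.hyps(2) subst_word_nonempty by blast
  show ?case unfolding subst_word_comp using subst.IH[OF ne] .
next
  case (mult u v p' q')
  show ?case using mult.IH[OF mult.prems, of "p @ subst_word \<sigma> p'" "subst_word \<sigma> q' @ q"] by simp
qed

lemma snd_gev_rev: "snd (gev g (rev xs)) = snd (gev g xs)"
  by (simp add: snd_gev rev_filter[symmetric])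

lemma snd_gev_app: "snd (gev g (xs @ ys)) = (snd (gev g xs) \<noteq> snd (gev g ys))"
  by (simp add: gev_append gmul_def)

lemma blk_even: "\<not> snd (gev g (blk N b))"
  unfolding blk_def snd_gev_app snd_gev_rev by auto

lemma WN_sat: "N \<ge> 1 \<Longrightarrow> satisfies_id TYPE(Dinf) (WN N) (blk N (2*N) @ blk N 0)"
proof -
  assume N: "N \<ge> 1"
  have ne: "blk N 0 \<noteq> []"
  proof
    assume "blk N 0 = []"
    then have "length (blk N 0) = 0" by simp
    then show False using N by simp
  qed
  have "gev g (WN N) = gev g (blk N (2*N) @ blk N 0)" for g
  proof -
    obtain k1 where 1: "gev g (blk N 0) = (k1, False)" using blk_even[of g N 0] by (metis prod.collapse)
    obtain k2 where 2: "gev g (blk N (2*N)) = (k2, False)" using blk_even[of g N "2*N"] by (metis prod.collapse)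
    show ?thesis unfolding WN_def gev_append 1 2 by (simp add: gmul_def)
  qed
  then have G: "\<forall>g. gev g (WN N) = gev g (blk N (2*N) @ blk N 0)" by blast
  have n1: "WN N \<noteq> []" unfolding WN_def using ne by simp
  have n2: "blk N (2*N) @ blk N 0 \<noteq> []" using ne by simp
  show ?thesis unfolding sat_iff using n1 n2 G by blast
qed

lemma count_subst: "count_list (subst_word \<sigma> D) z = sum_list (map (\<lambda>x. count_list (\<sigma> x) z) D)"
  by (induction D) (simp_all add: subst_word_def)

lemma even_factor_long:
  assumes N: "N \<ge> 1" and W: "WN N = X @ F @ Y" and F: "F \<noteq> []" and ev: "\<forall>z. even (count_list F z)"
  shows "N + 2 \<le> length F"
proof -
  obtain c F' where cF: "F = c # F'" using F by (cases F) auto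
  have "even (count_list F c)" using ev by blast
  then have "count_list F' c \<noteq> 0" using cF by (cases "count_list F' c") auto
  then have "c \<in> set F'" by (simp add: count_list_0_iff)
  then obtain F1 F2 where F': "F' = F1 @ c # F2" by (meson split_list)
  define s where "s = length X"
  define t where "t = length X + 1 + length F1"
  have W2: "WN N = X @ c # F1 @ c # F2 @ Y" using W cF F' by simp
  have c1: "WN N ! s = c" unfolding W2 s_def by simp
  have c2: "WN N ! t = c" unfolding W2 t_def
    by (simp add: nth_append)
  have t8: "t < 8*N" using WN_len[of N] W2 t_def by simp
  have st: "s < t" by (simp add: s_def t_def)
  have "wN N s = wN N t" using c1 c2 WN_nth[of s N] WN_nth[of t N] st t8 by simp
  then have "s + N + 1 \<le> t" using wN_P1[OF st t8] by blast
  then show ?thesis using cF F' s_def t_def by simp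
qed

lemma no_rep:
  assumes N: "N \<ge> 2" and W: "WN N = X @ S @ Y @ S @ Z" and S: "2 \<le> length S"
  shows False
proof -
  define s where "s = length X"
  define t where "t = length X + length S + length Y"
  have W2: "WN N = X @ (S @ (Y @ (S @ Z)))" using W by simp
  have a: "WN N ! (s + k) = S ! k" if "k < length S" for k
    unfolding W2 s_def using that by (simp add: nth_append)
  have b: "WN N ! (t + k) = S ! k" if "k < length S" for k
  proof -
    have "WN N = (X @ S @ Y) @ (S @ Z)" using W by simp
    then show ?thesis unfolding t_def using that by (simp add: nth_append)
  qed
  have len: "t + length S \<le> 8*N" using WN_len[of N] W t_def by simp
  have S0: "0 < length S" "1 < length S" using S by auto
  have st: "s < t" using S0 by (simp add: s_def t_def)
  have t1: "t + 1 < 8*N" using len S by simp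
  have "WN N ! s = WN N ! t" using a[OF S0(1)] b[OF S0(1)] by simp
  then have e1: "wN N s = wN N t" using WN_nth[of s N] WN_nth[of t N] st t1 by simp
  have "WN N ! (s+1) = WN N ! (t+1)" using a[OF S0(2)] b[OF S0(2)] by simp
  then have e2: "wN N (s+1) = wN N (t+1)" using WN_nth[of "s+1" N] WN_nth[of "t+1" N] st t1 by simp
  show False using wN_P2[OF N st t1 e1] e2 by blast
qed

lemma key:
  assumes N: "N \<ge> 2" and sat: "satisfies_id TYPE(Dinf) u v" and lu: "length u < N + 2"
    and ne: "\<forall>x. \<sigma> x \<noteq> []" and W: "p @ subst_word \<sigma> u @ q = WN N"
  shows "v = u"
proof -
  have "inj_st u" unfolding inj_st_def
  proof (intro allI impI notI)
    fix i j assume ij: "i < j" and j: "j < length u" and e: "st (take i u) = st (take j u)"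
    define D where "D = drop i (take j u)"
    have tj: "take j u = take i u @ D" unfolding D_def using ij
      by (metis append_take_drop_id less_imp_le_nat min.absorb1 take_take)
    have Dne: "D \<noteq> []" unfolding D_def using ij j by simp
    have Dlen: "length D \<le> length u" unfolding D_def by simp
    have Dev: "even (count_list D z)" for z
    proof -
      have "st (take i u) z = st (take j u) z" using e by simp
      then have "\<not> st D z" unfolding tj st_append by (cases "st (take i u) z") auto
      then show ?thesis by (simp add: st_def)
    qed
    have u: "u = take i u @ D @ drop j u" using tj by (metis append.assoc append_take_drop_id)
    have W2: "WN N = (p @ subst_word \<sigma> (take i u)) @ subst_word \<sigma> D @ (subst_word \<sigma> (drop j u) @ q)"
      using W u by (metis append.assoc subst_word_append)
    have sDne: "subst_word \<sigma> D \<noteq> []" using subst_word_nonempty[OF ne Dne] .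
    have sDev: "\<forall>z. even (count_list (subst_word \<sigma> D) z)"
    proof
      fix z
      have "count_list (subst_word \<sigma> D) z = (\<Sum>x\<in>set D. count_list D x * count_list (\<sigma> x) z)"
        unfolding count_subst sum_list_map_eq_sum_count ..
      moreover have "even (\<Sum>x\<in>set D. count_list D x * count_list (\<sigma> x) z)"
        by (intro dvd_sum) (simp add: Dev)
      ultimately show "even (count_list (subst_word \<sigma> D) z)" by simp
    qed
    have long: "N + 2 \<le> length (subst_word \<sigma> D)"
      using even_factor_long[OF _ W2 sDne sDev] N by simp
    have one: "length (\<sigma> x) = 1" if x: "x \<in> set D" for x
    proof (rule ccontr)
      assume "length (\<sigma> x) \<noteq> 1"
      then have l2: "2 \<le> length (\<sigma> x)" using ne by (metis One_nat_def length_0_conv less_2_cases not_le)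
      obtain D1 D' where D1: "D = D1 @ x # D'" "x \<notin> set D1" using x by (meson split_list_first)
      have "count_list D x = 1 + count_list D' x" using D1 by simp
      then have "count_list D' x \<noteq> 0" using Dev[of x] by (metis add.right_neutral odd_one)
      then obtain D2 D3 where D': "D' = D2 @ x # D3" by (meson count_list_0_iff split_list)
      have "subst_word \<sigma> D = subst_word \<sigma> D1 @ \<sigma> x @ subst_word \<sigma> D2 @ \<sigma> x @ subst_word \<sigma> D3"
        using D1 D' by (simp add: subst_word_def)
      then have "WN N = (p @ subst_word \<sigma> (take i u) @ subst_word \<sigma> D1) @ \<sigma> x @ subst_word \<sigma> D2 @ \<sigma> x @
          (subst_word \<sigma> D3 @ subst_word \<sigma> (drop j u) @ q)"
        using W2 by simp
      then show False using no_rep[OF N _ l2] by blast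
    qed
    have "length (subst_word \<sigma> D) = length D"
    proof -
      have "length (subst_word \<sigma> D) = sum_list (map (\<lambda>x. length (\<sigma> x)) D)"
        by (simp add: subst_word_def length_concat comp_def)
      also have "\<dots> = sum_list (map (\<lambda>x. 1) D)"
        using one by (metis (mono_tags, lifting) map_eq_conv)
      also have "\<dots> = length D" by (simp add: sum_list_triv)
      finally show ?thesis .
    qed
    then show False using long Dlen lu by simp
  qed
  then show ?thesis using isoterm_inj[OF _ sat] by blast
qed

lemma part3: "\<not> finitely_based TYPE(Dinf)"
proof
  assume "finitely_based TYPE(Dinf)"
  then obtain \<Sigma> where fin: "finite \<Sigma>" and sat: "\<forall>(u, v) \<in> \<Sigma>. satisfies_id TYPE(Dinf) u v"
    and cmp: "\<forall>u v. satisfies_id TYPE(Dinf) u v \<longrightarrow> derivable \<Sigma> u v"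
    unfolding finitely_based_def by blast
  define L where "L = (\<Sum>(a, b)\<in>\<Sigma>. length a + length b)"
  have bnd: "length a \<le> L \<and> length b \<le> L" if "(a, b) \<in> \<Sigma>" for a b
  proof -
    have "(\<lambda>(a, b). length a + length b) (a, b) \<le> L"
      unfolding L_def by (rule member_le_sum[OF that]) (use fin in auto)
    then show ?thesis by simp
  qed
  define N where "N = L + 2"
  have N2: "N \<ge> 2" by (simp add: N_def)
  have symsat: "satisfies_id TYPE(Dinf) b a" if "satisfies_id TYPE(Dinf) a b" for a b :: "nat list"
    using that by (auto simp: satisfies_id_def)
  have ax: "p @ subst_word \<sigma> a @ q = WN N \<longleftrightarrow> p @ subst_word \<sigma> b @ q = WN N"
    if ab: "(a, b) \<in> \<Sigma>" and ne: "\<forall>x. \<sigma> x \<noteq> []" for a b \<sigma> p q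
  proof -
    have s1: "satisfies_id TYPE(Dinf) a b" using sat ab by blast
    have s2: "satisfies_id TYPE(Dinf) b a" using symsat[OF s1] .
    have la: "length a < N + 2" using bnd[OF ab] by (simp add: N_def)
    have lb: "length b < N + 2" using bnd[OF ab] by (simp add: N_def)
    show ?thesis
    proof
      assume W: "p @ subst_word \<sigma> a @ q = WN N"
      have "b = a" by (rule key[OF N2 s1 la ne W])
      then show "p @ subst_word \<sigma> b @ q = WN N" using W by simp
    next
      assume W: "p @ subst_word \<sigma> b @ q = WN N"
      have "a = b" by (rule key[OF N2 s2 lb ne W])
      then show "p @ subst_word \<sigma> a @ q = WN N" using W by simp
    qed
  qed
  have D: "derivable \<Sigma> (WN N) (blk N (2*N) @ blk N 0)" using cmp WN_sat N2 by simp
  have "[] @ subst_word (\<lambda>x. [x]) (WN N) @ [] = WN N \<longleftrightarrow>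
      [] @ subst_word (\<lambda>x. [x]) (blk N (2*N) @ blk N 0) @ [] = WN N"
  proof -
    have ne1: "\<forall>x::nat. [x] \<noteq> ([] :: nat list)" by simp
    show ?thesis by (rule deriv_inv[of \<Sigma> "WN N", OF ax D ne1])
  qed
  then have eq: "blk N (2*N) @ blk N 0 = WN N" by (simp add: subst_word_id)
  have "(blk N (2*N) @ blk N 0) ! 0 = 2*N" using N2 by (simp add: nth_append blk_nth aN_def)
  moreover have "WN N ! 0 = 0" using N2 by (simp add: WN_def nth_append blk_nth aN_def)
  ultimately show False using eq N2 by simp
qed

theorem mainTheorem5:
  shows "in_Com_malcev_Fin TYPE(Dinf)
     \<and> (\<forall>n \<ge> 1. isoterm TYPE(Dinf) (zimin n))
     \<and> \<not> finitely_based TYPE(Dinf)"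
  using part1 part2 part3 by blast

end
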